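(* The set ${\operatorname{\mathsf{TPD}}}_{n}(\mathbb{S}_{\max}^\vee)$ is equal to the set \[ \{A=(a_{ij}) \in (\mathbb{S}_{\max}^{\vee})^{n \times n} : \mathbf{0} < a_{ii}\; \forall i \in [n],\; a_{ij}=a_{ji} \;\text{and}\; a_{ij}^{ 2} < a_{ii} a_{jj}\; \forall i,j \in [n], i \neq j\}\enspace . \]
   Context: $\mathbb{S}_{\max}$ is the symmetrized tropical semiring over a divisible totally ordered abelian group, with zero $\mathbf{0}$, unit $\mathbf{1}$, minus $\ominus$; $\mathbb{S}_{\max}^\vee$ is the set of signed elements (positive, negative or $\mathbf{0}$), $\mathbb{S}_{\max}^\oplus$ the set of positive elements together with $\mathbf{0}$. For $a,b\in\mathbb{S}_{\max}$, $a<b$ iff $b\ominus a\in\mathbb{S}_{\max}^\oplus\setminus\{\mathbf{0}\}$. ${\operatorname{\mathsf{TPD}}}_n(\mathbb{S}_{\max}^\vee)$ is the set of symmetric matrices $A\in(\mathbb{S}_{\max}^\vee)^{n\times n}$ such that $\mathbf{0}<x^TAx$ for all $x\in(\mathbb{S}_{\max}^\vee)^n\setminus\{\mathbf{0}\}$. *)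

theory Defs
  imports Main
begin

text \<open>Symmetrized tropical (max-plus) semiring over a totally ordered abelian
  group 'g (written additively).  Elements: the zero (= -infinity), and for each
  modulus a in 'g a positive element (+a), a negative element (-a) and a
  balanced element (a*).\<close>

datatype ssign = SP | SN | SB

datatype 'g smax = SZero | SEl ssign 'g

fun ssign_mul :: "ssign \<Rightarrow> ssign \<Rightarrow> ssign" where
  "ssign_mul SB _ = SB"
| "ssign_mul _ SB = SB"
| "ssign_mul SP SP = SP"
| "ssign_mul SN SN = SP"
| "ssign_mul SP SN = SN"
| "ssign_mul SN SP = SN"

fun ssign_neg :: "ssign \<Rightarrow> ssign" where
  "ssign_neg SP = SN"
| "ssign_neg SN = SP"
| "ssign_neg SB = SB"

fun splus :: "'g::linorder smax \<Rightarrow> 'g smax \<Rightarrow> 'g smax" where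
  "splus SZero y = y"
| "splus x SZero = x"
| "splus (SEl s a) (SEl t b) =
     (if b < a then SEl s a
      else if a < b then SEl t b
      else if s = t then SEl s a else SEl SB a)"

fun stimes :: "'g::plus smax \<Rightarrow> 'g smax \<Rightarrow> 'g smax" where
  "stimes SZero _ = SZero"
| "stimes _ SZero = SZero"
| "stimes (SEl s a) (SEl t b) = SEl (ssign_mul s t) (a + b)"

fun sminus :: "'g smax \<Rightarrow> 'g smax" where
  "sminus SZero = SZero"
| "sminus (SEl s a) = SEl (ssign_neg s) a"

definition sminus2 :: "'g::linorder smax \<Rightarrow> 'g smax \<Rightarrow> 'g smax" where
  "sminus2 a b = splus a (sminus b)"

definition signed :: "'g smax \<Rightarrow> bool" where
  "signed x \<longleftrightarrow> x = SZero \<or> (\<exists>s a. s \<noteq> SB \<and> x = SEl s a)"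

definition spositive :: "'g smax \<Rightarrow> bool" where
  "spositive x \<longleftrightarrow> x = SZero \<or> (\<exists>a. x = SEl SP a)"

definition sless :: "'g::linorder smax \<Rightarrow> 'g smax \<Rightarrow> bool" where
  "sless a b \<longleftrightarrow> spositive (sminus2 b a) \<and> sminus2 b a \<noteq> SZero"

definition ssum :: "'g::linorder smax list \<Rightarrow> 'g smax" where
  "ssum xs = foldr splus xs SZero"

definition quad_form :: "nat \<Rightarrow> (nat \<Rightarrow> nat \<Rightarrow> 'g::{linorder,plus} smax) \<Rightarrow> (nat \<Rightarrow> 'g smax) \<Rightarrow> 'g smax" where
  "quad_form n A x =
     ssum (concat (map (\<lambda>i. map (\<lambda>j. stimes (stimes (x i) (A i j)) (x j)) [0..<n]) [0..<n]))"

definition TPD :: "nat \<Rightarrow> (nat \<Rightarrow> nat \<Rightarrow> 'g::linordered_ab_group_add smax) set" where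
  "TPD n = {A. (\<forall>i<n. \<forall>j<n. signed (A i j)) \<and> (\<forall>i<n. \<forall>j<n. A i j = A j i) \<and>
      (\<forall>x. (\<forall>i<n. signed (x i)) \<and> (\<exists>i<n. x i \<noteq> SZero) \<longrightarrow> sless SZero (quad_form n A x))}"

definition divisible_group :: "'g::ab_group_add itself \<Rightarrow> bool" where
  "divisible_group _ \<longleftrightarrow> (\<forall>(x::'g) (k::nat). 0 < k \<longrightarrow> (\<exists>y. (\<Sum>i<k. y) = x))"

end

theory Submission
  imports Defs
begin

lemma ssum_good:
  fixes M :: "'g::linorder"
  assumes "\<forall>y\<in>set xs. y = SZero \<or> (\<exists>b. y = SEl SP b \<and> b \<le> M) \<or> (\<exists>s b. y = SEl s b \<and> b < M)"
  shows "ssum xs = SZero \<or> (\<exists>b. ssum xs = SEl SP b \<and> b \<le> M) \<or> (\<exists>s b. ssum xs = SEl s b \<and> b < M)"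
  using assms
proof (induction xs)
  case Nil then show ?case by (simp add: ssum_def)
next
  case (Cons y ys)
  then have IH: "ssum ys = SZero \<or> (\<exists>b. ssum ys = SEl SP b \<and> b \<le> M) \<or> (\<exists>s b. ssum ys = SEl s b \<and> b < M)"
    and hy: "y = SZero \<or> (\<exists>b. y = SEl SP b \<and> b \<le> M) \<or> (\<exists>s b. y = SEl s b \<and> b < M)" by auto
  have e: "ssum (y#ys) = splus y (ssum ys)" by (simp add: ssum_def)
  show ?case unfolding e using IH hy
    by (elim disjE exE conjE; simp; auto)
qed

lemma ssum_pos:
  fixes M :: "'g::linorder"
  assumes "SEl SP M \<in> set xs"
    "\<forall>y\<in>set xs. y = SZero \<or> (\<exists>b. y = SEl SP b \<and> b \<le> M) \<or> (\<exists>s b. y = SEl s b \<and> b < M)"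
  shows "ssum xs = SEl SP M"
  using assms
proof (induction xs)
  case Nil then show ?case by simp
next
  case (Cons y ys)
  have e: "ssum (y#ys) = splus y (ssum ys)" by (simp add: ssum_def)
  have G: "ssum ys = SZero \<or> (\<exists>b. ssum ys = SEl SP b \<and> b \<le> M) \<or> (\<exists>s b. ssum ys = SEl s b \<and> b < M)"
    using ssum_good[of ys M] Cons.prems(2) by auto
  have hy: "y = SZero \<or> (\<exists>b. y = SEl SP b \<and> b \<le> M) \<or> (\<exists>s b. y = SEl s b \<and> b < M)"
    using Cons.prems(2) by auto
  show ?case
  proof (cases "y = SEl SP M")
    case True
    have e': "ssum (y#ys) = splus (SEl SP M) (ssum ys)" using e True by simp
    show ?thesis unfolding e' using G by (elim disjE exE conjE; simp; auto)
  next
    case False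
    then have "ssum ys = SEl SP M" using Cons by auto
    then show ?thesis unfolding e using hy by (elim disjE exE conjE; simp; auto)
  qed
qed

lemma ssum_good2:
  fixes M :: "'g::linorder"
  assumes "\<forall>y\<in>set xs. y = SZero \<or> (\<exists>s b. y = SEl s b \<and> b \<le> M)"
  shows "ssum xs = SZero \<or> (\<exists>s b. ssum xs = SEl s b \<and> b \<le> M)"
  using assms
proof (induction xs)
  case Nil then show ?case by (simp add: ssum_def)
next
  case (Cons y ys)
  then have IH: "ssum ys = SZero \<or> (\<exists>s b. ssum ys = SEl s b \<and> b \<le> M)"
    and hy: "y = SZero \<or> (\<exists>s b. y = SEl s b \<and> b \<le> M)" by auto
  have e: "ssum (y#ys) = splus y (ssum ys)" by (simp add: ssum_def)
  show ?case unfolding e using IH hy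
    by (elim disjE exE conjE; simp; auto)
qed

lemma ssum_neg:
  fixes M :: "'g::linorder"
  assumes "SEl SN M \<in> set xs"
    "\<forall>y\<in>set xs. y = SZero \<or> (\<exists>s b. y = SEl s b \<and> b \<le> M)"
  shows "\<exists>s. ssum xs = SEl s M \<and> s \<noteq> SP"
  using assms
proof (induction xs)
  case Nil then show ?case by simp
next
  case (Cons y ys)
  have e: "ssum (y#ys) = splus y (ssum ys)" by (simp add: ssum_def)
  have G: "ssum ys = SZero \<or> (\<exists>s b. ssum ys = SEl s b \<and> b \<le> M)"
    using ssum_good2[of ys M] Cons.prems(2) by auto
  have hy: "y = SZero \<or> (\<exists>s b. y = SEl s b \<and> b \<le> M)"
    using Cons.prems(2) by auto
  show ?case
  proof (cases "y = SEl SN M")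
    case True
    have e': "ssum (y#ys) = splus (SEl SN M) (ssum ys)" using e True by simp
    show ?thesis unfolding e' using G by (elim disjE exE conjE; simp; auto)
  next
    case False
    then obtain s where "ssum ys = SEl s M" "s \<noteq> SP" using Cons by auto
    then show ?thesis unfolding e using hy by (elim disjE exE conjE; simp; auto)
  qed
qed

lemma sless_zero: "sless SZero y \<longleftrightarrow> (\<exists>a. y = SEl SP a)"
  by (cases y) (auto simp: sless_def sminus2_def spositive_def)

lemma sless_SP: "sless (SEl SP a) (SEl SP b) \<longleftrightarrow> a < b"
  by (auto simp: sless_def sminus2_def spositive_def)

lemma set_qf: "set (concat (map (\<lambda>i. map (\<lambda>j. f i j) [0..<n]) [0..<n])) = {f i j | i j. i < n \<and> j < n}"
  by auto blast

lemma sq_signed: "s \<noteq> SB \<Longrightarrow> ssign_mul s s = SP"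
  by (cases s) auto

lemma half_lt:
  fixes a p q M :: "'g::linordered_ab_group_add"
  assumes "a + a < p + q" "p \<le> M" "q \<le> M" shows "a < M"
proof (rule ccontr)
  assume "\<not> a < M" then have "M \<le> a" by simp
  then have "p + q \<le> a + a" using assms by (meson add_mono order_trans)
  then show False using assms(1) by simp
qed

lemma mix_ineq:
  fixes xk xl c dk dl :: "'g::linordered_ab_group_add"
  assumes "c + c < dk + dl"
  shows "(xk + c + xl) + (xk + c + xl) < (xk + dk + xk) + (xl + dl + xl)"
proof -
  have "(xk + c + xl) + (xk + c + xl) = (c + c) + (xk + xk + xl + xl)" by (simp add: ac_simps)
  also have "\<dots> < (dk + dl) + (xk + xk + xl + xl)" using assms by simp
  also have "\<dots> = (xk + dk + xk) + (xl + dl + xl)" by (simp add: ac_simps)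
  finally show ?thesis .
qed

lemma stimes_zero_right[simp]: "stimes y SZero = SZero"
  by (cases y) auto

lemma ssum_zero: "\<forall>y\<in>set xs. y = SZero \<Longrightarrow> ssum xs = SZero"
  by (induction xs) (auto simp: ssum_def)

lemma signedE: "signed y \<Longrightarrow> (y = SZero \<Longrightarrow> P) \<Longrightarrow> (\<And>s a. y = SEl s a \<Longrightarrow> s \<noteq> SB \<Longrightarrow> P) \<Longrightarrow> P"
  unfolding signed_def by blast

theorem theorem4p3:
  fixes n :: nat
  assumes "divisible_group TYPE('g::linordered_ab_group_add)"
  shows "(TPD n :: (nat \<Rightarrow> nat \<Rightarrow> 'g smax) set) =
    {A. (\<forall>i<n. \<forall>j<n. signed (A i j)) \<and>
        (\<forall>i<n. sless SZero (A i i)) \<and>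
        (\<forall>i<n. \<forall>j<n. i \<noteq> j \<longrightarrow>
            A i j = A j i \<and> sless (stimes (A i j) (A i j)) (stimes (A i i) (A j j)))}"
proof (intro equalityI subsetI)
  fix A :: "nat \<Rightarrow> nat \<Rightarrow> 'g smax"
  assume "A \<in> TPD n"
  then have sg: "\<forall>i<n. \<forall>j<n. signed (A i j)" and sym: "\<forall>i<n. \<forall>j<n. A i j = A j i"
    and P: "\<And>x. (\<forall>i<n. signed (x i)) \<Longrightarrow> (\<exists>i<n. x i \<noteq> SZero) \<Longrightarrow> sless SZero (quad_form n A x)"
    by (auto simp: TPD_def)
  have diag: "\<exists>d. A i i = SEl SP d" if "i<n" for i
  proof -
    define x where "x = (\<lambda>k. if k = i then SEl SP (0::'g) else SZero)"
    have ps: "sless SZero (quad_form n A x)" by (rule P) (auto simp: x_def signed_def that)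
    have z: "stimes (stimes (x k) (A k l)) (x l) = SZero" if "\<not> (k = i \<and> l = i)" for k l
      using that by (auto simp: x_def)
    have "signed (A i i)" using sg that by auto
    then show ?thesis
    proof (rule signedE)
      assume "A i i = SZero"
      then have "quad_form n A x = SZero" unfolding quad_form_def
        by (intro ssum_zero) (auto simp: x_def)
      then show ?thesis using ps by (simp add: sless_zero)
    next
      fix s a assume h: "A i i = SEl s a" "s \<noteq> SB"
      show ?thesis
      proof (cases s)
        case SN
        have "\<exists>s. quad_form n A x = SEl s a \<and> s \<noteq> SP" unfolding quad_form_def
        proof (rule ssum_neg)
          show "SEl SN a \<in> set (concat (map (\<lambda>i. map (\<lambda>j. stimes (stimes (x i) (A i j)) (x j)) [0..<n]) [0..<n]))"
          proof -
            have "stimes (stimes (x i) (A i i)) (x i) = SEl SN a" using h SN by (simp add: x_def)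
            then show ?thesis using that by force
          qed
          show "\<forall>y\<in>set (concat (map (\<lambda>i. map (\<lambda>j. stimes (stimes (x i) (A i j)) (x j)) [0..<n]) [0..<n])). y = SZero \<or> (\<exists>s b. y = SEl s b \<and> b \<le> a)"
            using h SN by (auto simp: x_def)
        qed
        then show ?thesis using ps by (auto simp: sless_zero)
      qed (use h in auto)
    qed
  qed
  obtain d where d: "\<And>i. i<n \<Longrightarrow> A i i = SEl SP (d i)" using diag by metis
  show "A \<in> {A. (\<forall>i<n. \<forall>j<n. signed (A i j)) \<and>
        (\<forall>i<n. sless SZero (A i i)) \<and>
        (\<forall>i<n. \<forall>j<n. i \<noteq> j \<longrightarrow>
            A i j = A j i \<and> sless (stimes (A i j) (A i j)) (stimes (A i i) (A j j)))}"
  proof (intro CollectI conjI)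
    show "\<forall>i<n. \<forall>j<n. signed (A i j)" by fact
    show "\<forall>i<n. sless SZero (A i i)" using d by (simp add: sless_zero)
  next
    show "\<forall>i<n. \<forall>j<n. i \<noteq> j \<longrightarrow>
            A i j = A j i \<and> sless (stimes (A i j) (A i j)) (stimes (A i i) (A j j))"
    proof (intro allI impI conjI)
    fix i j assume ij: "i<n" "j<n" "i \<noteq> j"
    show "A i j = A j i" using sym ij by auto
    have "signed (A i j)" using sg ij by auto
    then show "sless (stimes (A i j) (A i j)) (stimes (A i i) (A j j))"
    proof (rule signedE)
      assume "A i j = SZero" then show ?thesis using d ij by (simp add: sless_zero)
    next
      fix s c assume h: "A i j = SEl s c" "s \<noteq> SB"
      have "c + c < d i + d j"
      proof (rule ccontr)
        assume "\<not> c + c < d i + d j"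
        then have le: "d i + d j \<le> c + c" by simp
        define t where "t = ssign_neg s"
        define x where "x = (\<lambda>k. if k = i then SEl SP (0::'g) else if k = j then SEl t (d i - c) else SZero)"
        have ps: "sless SZero (quad_form n A x)" by (rule P) (use ij h(2) in \<open>auto simp: x_def signed_def t_def elim: ssign_neg.elims\<close>)
        have hji: "A j i = SEl s c" using sym ij h by auto
        have ts: "ssign_mul (ssign_mul SP s) t = SN" "ssign_mul (ssign_mul t s) SP = SN"
          using h(2) unfolding t_def by (cases s; simp)+
        have jj: "(d i - c) + d j + (d i - c) \<le> d i"
        proof -
          have "(d i - c) + d j + (d i - c) = d i + ((d i + d j) - (c + c))" by (simp add: algebra_simps)
          moreover have "(d i + d j) - (c + c) \<le> 0" using le by simp
          ultimately show ?thesis by (metis add_le_same_cancel1)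
        qed
        have "\<exists>s. quad_form n A x = SEl s (d i) \<and> s \<noteq> SP" unfolding quad_form_def
        proof (rule ssum_neg)
          have "stimes (stimes (x i) (A i j)) (x j) = SEl SN (d i)"
            using ij h ts by (simp add: x_def)
          then show "SEl SN (d i) \<in> set (concat (map (\<lambda>i. map (\<lambda>j. stimes (stimes (x i) (A i j)) (x j)) [0..<n]) [0..<n]))"
            using ij by force
          show "\<forall>y\<in>set (concat (map (\<lambda>i. map (\<lambda>j. stimes (stimes (x i) (A i j)) (x j)) [0..<n]) [0..<n])). y = SZero \<or> (\<exists>s b. y = SEl s b \<and> b \<le> d i)"
          proof (intro ballI)
            fix y assume "y \<in> set (concat (map (\<lambda>i. map (\<lambda>j. stimes (stimes (x i) (A i j)) (x j)) [0..<n]) [0..<n]))"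
            then obtain k l where kl0: "k < n" "l < n" and y: "y = stimes (stimes (x k) (A k l)) (x l)" by auto
            show "y = SZero \<or> (\<exists>s b. y = SEl s b \<and> b \<le> d i)"
            proof (cases "y = SZero")
              case True then show ?thesis by simp
            next
              case False
            then have kl: "k < n" "l < n" "stimes (stimes (x k) (A k l)) (x l) \<noteq> SZero" using kl0 y by auto
            have k: "k = i \<or> k = j"
            proof (rule ccontr)
              assume "\<not> (k = i \<or> k = j)" then have "x k = SZero" by (simp add: x_def)
              then show False using kl(3) by simp
            qed
            have l: "l = i \<or> l = j"
            proof (rule ccontr)
              assume "\<not> (l = i \<or> l = j)" then have "x l = SZero" by (simp add: x_def)
              then show False using kl(3) by simp
            qed
            have ne: "j \<noteq> i" using ij by simp
            have "\<exists>s b. stimes (stimes (x k) (A k l)) (x l) = SEl s b \<and> b \<le> d i"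
              using k l
            proof (elim disjE)
              assume "k = i" "l = i" then show ?thesis using ij d by (simp add: x_def)
            next
              assume "k = i" "l = j" then show ?thesis using ij ne h by (simp add: x_def)
            next
              assume "k = j" "l = i" then show ?thesis using ij ne hji by (simp add: x_def)
            next
              assume "k = j" "l = j" then show ?thesis using ij ne d jj by (simp add: x_def)
            qed
            then show ?thesis using y by simp
            qed
          qed
        qed
        then show False using ps by (auto simp: sless_zero)
      qed
      then show ?thesis using h d ij by (simp add: sq_signed sless_SP)
    qed
    qed
  qed
next
  fix A :: "nat \<Rightarrow> nat \<Rightarrow> 'g smax"
  assume "A \<in> {A. (\<forall>i<n. \<forall>j<n. signed (A i j)) \<and>
        (\<forall>i<n. sless SZero (A i i)) \<and>
        (\<forall>i<n. \<forall>j<n. i \<noteq> j \<longrightarrow>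
            A i j = A j i \<and> sless (stimes (A i j) (A i j)) (stimes (A i i) (A j j)))}"
  then have sg: "\<forall>i<n. \<forall>j<n. signed (A i j)" and dg: "\<forall>i<n. sless SZero (A i i)"
    and off: "\<And>i j. i<n \<Longrightarrow> j<n \<Longrightarrow> i \<noteq> j \<Longrightarrow> A i j = A j i \<and> sless (stimes (A i j) (A i j)) (stimes (A i i) (A j j))"
    by auto
  obtain d where d: "\<And>i. i<n \<Longrightarrow> A i i = SEl SP (d i)" 
  proof -
    have "\<forall>i<n. \<exists>a. A i i = SEl SP a" using dg by (simp add: sless_zero)
    then show ?thesis using that by metis
  qed
  have sym: "\<forall>i<n. \<forall>j<n. A i j = A j i" using off by metis
  have pos: "sless SZero (quad_form n A x)" if xs: "\<forall>i<n. signed (x i)" and xn: "\<exists>i<n. x i \<noteq> SZero" for x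
  proof -
    define xm where "xm k = (case x k of SEl _ m \<Rightarrow> m | SZero \<Rightarrow> 0)" for k
    define S where "S = {k. k<n \<and> x k \<noteq> SZero}"
    define M where "M = Max ((\<lambda>k. xm k + d k + xm k) ` S)"
    have fS: "finite S" and neS: "S \<noteq> {}" using xn by (auto simp: S_def)
    have "M \<in> (\<lambda>k. xm k + d k + xm k) ` S" unfolding M_def using fS neS by (intro Max_in) auto
    then obtain i0 where i0: "i0 \<in> S" "M = xm i0 + d i0 + xm i0" by auto
    have Mge: "xm k + d k + xm k \<le> M" if "k \<in> S" for k
      unfolding M_def using fS that by (intro Max_ge) auto
    have xform: "\<exists>s. x k = SEl s (xm k) \<and> s \<noteq> SB" if "k \<in> S" for k
    proof -
      have "signed (x k)" "x k \<noteq> SZero" using that xs by (auto simp: S_def)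
      then show ?thesis by (auto simp: signed_def xm_def)
    qed
    have "quad_form n A x = SEl SP M" unfolding quad_form_def
    proof (rule ssum_pos)
      obtain s where s: "x i0 = SEl s (xm i0)" "s \<noteq> SB" using xform[OF i0(1)] by blast
      have "stimes (stimes (x i0) (A i0 i0)) (x i0) = SEl SP M"
        using s d i0 by (cases s) (auto simp: S_def)
      then show "SEl SP M \<in> set (concat (map (\<lambda>i. map (\<lambda>j. stimes (stimes (x i) (A i j)) (x j)) [0..<n]) [0..<n]))"
        using i0 by (force simp: S_def)
      show "\<forall>y\<in>set (concat (map (\<lambda>i. map (\<lambda>j. stimes (stimes (x i) (A i j)) (x j)) [0..<n]) [0..<n])). y = SZero \<or> (\<exists>b. y = SEl SP b \<and> b \<le> M) \<or> (\<exists>s b. y = SEl s b \<and> b < M)"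
      proof (intro ballI)
        fix y assume "y \<in> set (concat (map (\<lambda>i. map (\<lambda>j. stimes (stimes (x i) (A i j)) (x j)) [0..<n]) [0..<n]))"
        then obtain k l where kl0: "k < n" "l < n" and y: "y = stimes (stimes (x k) (A k l)) (x l)" by auto
        show "y = SZero \<or> (\<exists>b. y = SEl SP b \<and> b \<le> M) \<or> (\<exists>s b. y = SEl s b \<and> b < M)"
        proof (cases "y = SZero")
          case True then show ?thesis by simp
        next
          case False
        then have kl: "k < n" "l < n" "stimes (stimes (x k) (A k l)) (x l) \<noteq> SZero" using kl0 y by auto
        then have kS: "k \<in> S" and lS: "l \<in> S" by (auto simp: S_def)
        obtain s where s: "x k = SEl s (xm k)" "s \<noteq> SB" using xform[OF kS] by blast
        obtain u where u: "x l = SEl u (xm l)" "u \<noteq> SB" using xform[OF lS] by blast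
        have "(\<exists>b. stimes (stimes (x k) (A k l)) (x l) = SEl SP b \<and> b \<le> M) \<or>
              (\<exists>s b. stimes (stimes (x k) (A k l)) (x l) = SEl s b \<and> b < M)"
        proof (cases "k = l")
          case True
          then show ?thesis using s u d kl Mge[OF kS] by (cases s) auto
        next
          case False
          have "signed (A k l)" using sg kl by auto
          then show ?thesis
          proof (rule signedE)
            assume "A k l = SZero" then show ?thesis using kl by simp
          next
            fix t c assume h: "A k l = SEl t c" "t \<noteq> SB"
            have "sless (SEl SP (c + c)) (SEl SP (d k + d l))"
              using off[OF kl(1,2) False] h d kl by (simp add: sq_signed)
            then have "c + c < d k + d l" by (simp add: sless_SP)
            then have "(xm k + c + xm l) + (xm k + c + xm l) < (xm k + d k + xm k) + (xm l + d l + xm l)"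
              by (rule mix_ineq)
            then have "xm k + c + xm l < M" using Mge[OF kS] Mge[OF lS] by (rule half_lt)
            then show ?thesis using s u h by simp
          qed
        qed
        then show ?thesis using y by simp
        qed
      qed
    qed
    then show ?thesis by (simp add: sless_zero)
  qed
  show "A \<in> TPD n" unfolding TPD_def using sg sym pos by blast
qed

end
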